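(* Let $\Gamma$ be a discrete group, $\widetilde{\Gamma}=\Gamma\times\Gamma^{\rm op}$, acting on $\Gamma$ by $(g_1,g_2)\cdot y=g_1yg_2$. Let $\widetilde{\Gamma}_1\subseteq\widetilde{\Gamma}$ be the intersection of the stabilizers of an infinite family of distinct elements $(x_n)_n$ of $\Gamma$, assume $\widetilde{\Gamma}_1$ is non-trivial, and fix $x$ in the family $(x_n)_n$. Then: (1) there is a subgroup $\Gamma_1$ of $\Gamma$, depending only on $\widetilde{\Gamma}_1$ and not on the choice of $x$, such that $\widetilde{\Gamma}_1=\{(\gamma_1,x^{-1}\gamma_1^{-1}x)\mid\gamma_1\in\Gamma_1\}$; (2) letting $\mathcal M(\widetilde{\Gamma}_1)=\Gamma_1'$ be the centralizer of $\Gamma_1$ in $\Gamma$ and $\widetilde{\mathcal M}(\widetilde{\Gamma}_1)=\{(\gamma_1,\gamma_2)\mid\gamma_1\in\Gamma_1',\ \gamma_2\in x^{-1}\Gamma_1'x\}$, the orbit $\widetilde{\mathcal M}(\widetilde{\Gamma}_1)x=x(x^{-1}\mathcal M(\widetilde{\Gamma}_1)x)=\Gamma_1'x$ is the set of all elements of $\Gamma$ fixed by $\widetilde{\Gamma}_1$; explicitly, for $\gamma_1,\gamma_2\in\Gamma_1'$ and $m\in\Gamma_1'$, $(\gamma_1,x^{-1}\gamma_2x)\cdot(mx)=\gamma_1m\gamma_2x$; (3) if $\widetilde{\mathcal M}(\widetilde{\Gamma}_1^{\alpha})$, $\widetilde{\mathcal M}(\widetilde{\Gamma}_1^{\beta})$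 are two subgroups constructed as in (2) from non-trivial groups $\widetilde{\Gamma}_1^\alpha,\widetilde{\Gamma}_1^\beta$ of this type with corresponding points $x_\alpha,x_\beta$ fixed by $\widetilde{\Gamma}_1^\alpha$, $\widetilde{\Gamma}_1^\beta$ respectively, and if $\widetilde{\mathcal M}(\widetilde{\Gamma}_1^{\alpha})x_\alpha\cap\widetilde{\mathcal M}(\widetilde{\Gamma}_1^{\beta})x_\beta$ is non-empty, containing an element $m_\alpha\cdot x_\alpha=m_\beta\cdot x_\beta$ with $m_\alpha\in\widetilde{\mathcal M}(\widetilde{\Gamma}_1^{\alpha})$, $m_\beta\in\widetilde{\mathcal M}(\widetilde{\Gamma}_1^{\beta})$, then $$\widetilde{\mathcal M}(\widetilde{\Gamma}_1^{\alpha})x_\alpha\cap\widetilde{\mathcal M}(\widetilde{\Gamma}_1^{\beta})x_\beta=\big(\widetilde{\mathcal M}(\widetilde{\Gamma}_1^{\alpha})\cap\widetilde{\mathcal M}(\widetilde{\Gamma}_1^{\beta})\big)\cdot(m_\varepsilon\cdot x_\varepsilon),\quad\varepsilon=\alpha,\beta.$$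
   Context: $\Gamma^{\rm op}$ is $\Gamma$ with the opposite multiplication, so that $(g_1,g_2)\cdot y=g_1yg_2$ defines a left action of $\Gamma\times\Gamma^{\rm op}$ on $\Gamma$. For a subset $K\subseteq\widetilde{\Gamma}$ and $y\in\Gamma$, $Ky$ denotes $\{k\cdot y\mid k\in K\}$. *)

theory Defs
  imports "HOL-Algebra.Algebra"
begin

text \<open>The group tilde-Gamma = Gamma x Gamma^op is represented by pairs of elements
  of the carrier; it acts on Gamma by (g1,g2).y = g1 y g2.\<close>

definition tact :: "('a, 'b) monoid_scheme \<Rightarrow> 'a \<times> 'a \<Rightarrow> 'a \<Rightarrow> 'a" where
  "tact G g y = fst g \<otimes>\<^bsub>G\<^esub> y \<otimes>\<^bsub>G\<^esub> snd g"

definition tcarrier :: "('a, 'b) monoid_scheme \<Rightarrow> ('a \<times> 'a) set" where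
  "tcarrier G = carrier G \<times> carrier G"

definition tone :: "('a, 'b) monoid_scheme \<Rightarrow> 'a \<times> 'a" where
  "tone G = (\<one>\<^bsub>G\<^esub>, \<one>\<^bsub>G\<^esub>)"

definition tset_act :: "('a, 'b) monoid_scheme \<Rightarrow> ('a \<times> 'a) set \<Rightarrow> 'a \<Rightarrow> 'a set" where
  "tset_act G K y = (\<lambda>k. tact G k y) ` K"

definition tstab :: "('a, 'b) monoid_scheme \<Rightarrow> 'a \<Rightarrow> ('a \<times> 'a) set" where
  "tstab G y = {g \<in> tcarrier G. tact G g y = y}"

definition tGamma1 :: "('a, 'b) monoid_scheme \<Rightarrow> (nat \<Rightarrow> 'a) \<Rightarrow> ('a \<times> 'a) set" where
  "tGamma1 G xs = (\<Inter>n. tstab G (xs n))"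

definition Gamma1_of :: "('a \<times> 'a) set \<Rightarrow> 'a set" where
  "Gamma1_of T = fst ` T"

definition centralizer :: "('a, 'b) monoid_scheme \<Rightarrow> 'a set \<Rightarrow> 'a set" where
  "centralizer G H = {g \<in> carrier G. \<forall>h\<in>H. g \<otimes>\<^bsub>G\<^esub> h = h \<otimes>\<^bsub>G\<^esub> g}"

definition Mcal :: "('a, 'b) monoid_scheme \<Rightarrow> ('a \<times> 'a) set \<Rightarrow> 'a set" where
  "Mcal G T = centralizer G (Gamma1_of T)"

definition Mtilde :: "('a, 'b) monoid_scheme \<Rightarrow> ('a \<times> 'a) set \<Rightarrow> 'a \<Rightarrow> ('a \<times> 'a) set" where
  "Mtilde G T x = Mcal G T \<times> ((inv\<^bsub>G\<^esub> x) <#\<^bsub>G\<^esub> Mcal G T #>\<^bsub>G\<^esub> x)"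

end

theory Submission
  imports Defs
begin

context group
begin

lemma invcl: "a \<in> carrier G \<Longrightarrow> y \<in> carrier G \<Longrightarrow> inv a \<otimes> (a \<otimes> y) = y"
  by (simp add: m_assoc[symmetric])

lemma invcr: "a \<in> carrier G \<Longrightarrow> y \<in> carrier G \<Longrightarrow> a \<otimes> (inv a \<otimes> y) = y"
  by (simp add: m_assoc[symmetric])

lemma cent_sub:
  assumes "H \<subseteq> carrier G"
  shows "subgroup (centralizer G H) G"
proof
  show "centralizer G H \<subseteq> carrier G" by (auto simp: centralizer_def)
  show "\<one> \<in> centralizer G H" using assms by (auto simp: centralizer_def)
next
  fix a b assume a: "a \<in> centralizer G H" and b: "b \<in> centralizer G H"
  show "a \<otimes> b \<in> centralizer G H"
  proof -
    { fix h assume h: "h \<in> H"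
      hence hc: "h \<in> carrier G" using assms by auto
      have ac: "a \<in> carrier G" and bc: "b \<in> carrier G" using a b by (auto simp: centralizer_def)
      have "a \<otimes> b \<otimes> h = a \<otimes> (b \<otimes> h)" using ac bc hc by (simp add: m_assoc)
      also have "\<dots> = a \<otimes> (h \<otimes> b)" using b h by (simp add: centralizer_def)
      also have "\<dots> = (a \<otimes> h) \<otimes> b" using ac bc hc by (simp add: m_assoc)
      also have "\<dots> = (h \<otimes> a) \<otimes> b" using a h by (simp add: centralizer_def)
      also have "\<dots> = h \<otimes> (a \<otimes> b)" using ac bc hc by (simp add: m_assoc)
      finally have "a \<otimes> b \<otimes> h = h \<otimes> (a \<otimes> b)" . }
    thus ?thesis using a b by (auto simp: centralizer_def)
  qed
next
  fix a assume a: "a \<in> centralizer G H"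
  hence ac: "a \<in> carrier G" by (auto simp: centralizer_def)
  { fix h assume h: "h \<in> H"
    hence hc: "h \<in> carrier G" using assms by auto
    have e: "a \<otimes> h = h \<otimes> a" using a h by (auto simp: centralizer_def)
    have "inv a \<otimes> h = inv a \<otimes> h \<otimes> a \<otimes> inv a" using ac hc by (simp add: m_assoc)
    also have "\<dots> = inv a \<otimes> (a \<otimes> h) \<otimes> inv a" using ac hc e by (simp add: m_assoc)
    also have "\<dots> = h \<otimes> inv a" using ac hc by (simp add: m_assoc invcl)
    finally have "inv a \<otimes> h = h \<otimes> inv a" . }
  thus "inv a \<in> centralizer G H" using ac by (auto simp: centralizer_def)
qed

lemma orbit_eq:
  assumes H: "subgroup H G" and x: "x \<in> carrier G"
  shows "tset_act G (H \<times> ((inv x <# H) #> x)) x = H #> x"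
proof
  have Hc: "\<And>h. h \<in> H \<Longrightarrow> h \<in> carrier G" using subgroup.mem_carrier[OF H] .
  show "tset_act G (H \<times> ((inv x <# H) #> x)) x \<subseteq> H #> x"
  proof
    fix y assume "y \<in> tset_act G (H \<times> ((inv x <# H) #> x)) x"
    then obtain q where q: "q \<in> H \<times> ((inv x <# H) #> x)" and yq: "y = tact G q x"
      unfolding tset_act_def by (rule imageE)
    obtain g g2 where qq: "q = (g, g2)" by (cases q)
    have g: "g \<in> H" and g2: "g2 \<in> (inv x <# H) #> x" using q unfolding qq by simp_all
    have y0: "y = g \<otimes> x \<otimes> g2" using yq qq by (simp add: tact_def)
    obtain k where k: "k \<in> H" and gk: "g2 = inv x \<otimes> k \<otimes> x"
      using g2 unfolding l_coset_def r_coset_def by blast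
    have "y = g \<otimes> x \<otimes> (inv x \<otimes> k \<otimes> x)" using y0 gk by simp
    moreover have "g \<otimes> x \<otimes> (inv x \<otimes> k \<otimes> x) = (g \<otimes> k) \<otimes> x"
      using Hc[OF g] Hc[OF k] x by (simp add: m_assoc invcr)
    ultimately have "y = (g \<otimes> k) \<otimes> x" by simp
    thus "y \<in> H #> x" unfolding r_coset_def using subgroup.m_closed[OF H g k] by blast
  qed
  show "H #> x \<subseteq> tset_act G (H \<times> ((inv x <# H) #> x)) x"
  proof
    fix y assume "y \<in> H #> x"
    then obtain h where h: "h \<in> H" and y: "y = h \<otimes> x" by (auto simp: r_coset_def)
    have "inv x \<otimes> \<one> \<in> inv x <# H" unfolding l_coset_def using subgroup.one_closed[OF H] by blast
    hence "(inv x \<otimes> \<one>) \<otimes> x \<in> (inv x <# H) #> x" unfolding r_coset_def by blast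
    hence "\<one> \<in> (inv x <# H) #> x" using x by simp
    moreover have "y = tact G (h, \<one>) x" using y Hc[OF h] x by (simp add: tact_def)
    ultimately show "y \<in> tset_act G (H \<times> ((inv x <# H) #> x)) x"
      unfolding tset_act_def using h by (intro image_eqI[where x="(h,\<one>)"]) auto
  qed
qed



lemma memT:
  "p \<in> tGamma1 G xs \<longleftrightarrow> fst p \<in> carrier G \<and> snd p \<in> carrier G \<and> (\<forall>n. fst p \<otimes> xs n \<otimes> snd p = xs n)"
  unfolding tGamma1_def tstab_def tcarrier_def tact_def by (cases p) auto

lemma sndT:
  assumes "(g1, g2) \<in> tGamma1 G xs" "xs n \<in> carrier G"
  shows "g2 = inv (xs n) \<otimes> inv g1 \<otimes> xs n"
proof -
  have c: "g1 \<in> carrier G" "g2 \<in> carrier G" and e: "g1 \<otimes> xs n \<otimes> g2 = xs n"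
    using assms by (auto simp: memT)
  have e2: "xs n = g1 \<otimes> xs n \<otimes> g2" using e by (rule sym)
  have A: "g2 = inv (g1 \<otimes> xs n) \<otimes> xs n"
    using inv_solve_left[of g2 "g1 \<otimes> xs n" "xs n"] c assms(2) e2 m_closed[OF c(1) assms(2)] by blast
  have B: "inv (g1 \<otimes> xs n) = inv (xs n) \<otimes> inv g1" by (rule inv_mult_group[OF c(1) assms(2)])
  show ?thesis using A B by (simp only:)
qed

lemma subT:
  assumes "range xs \<subseteq> carrier G"
  shows "subgroup (Gamma1_of (tGamma1 G xs)) G"
proof
  show "Gamma1_of (tGamma1 G xs) \<subseteq> carrier G" by (auto simp: Gamma1_of_def memT)
  have "(\<one>, \<one>) \<in> tGamma1 G xs" using assms by (simp add: memT image_subset_iff)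
  thus "\<one> \<in> Gamma1_of (tGamma1 G xs)" unfolding Gamma1_of_def by force
next
  fix a b assume "a \<in> Gamma1_of (tGamma1 G xs)" "b \<in> Gamma1_of (tGamma1 G xs)"
  then obtain a2 b2 where A: "(a, a2) \<in> tGamma1 G xs" and B: "(b, b2) \<in> tGamma1 G xs"
    unfolding Gamma1_of_def by force
  have c: "a \<in> carrier G" "a2 \<in> carrier G" "b \<in> carrier G" "b2 \<in> carrier G"
    using A B by (auto simp: memT)
  { fix n
    have xn: "xs n \<in> carrier G" using assms by auto
    have ea: "a \<otimes> xs n \<otimes> a2 = xs n" and eb: "b \<otimes> xs n \<otimes> b2 = xs n" using A B by (auto simp: memT)
    have "a \<otimes> b \<otimes> xs n \<otimes> (b2 \<otimes> a2) = a \<otimes> (b \<otimes> xs n \<otimes> b2) \<otimes> a2"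
      using c xn by (simp add: m_assoc)
    also have "\<dots> = xs n" using eb ea by simp
    finally have "a \<otimes> b \<otimes> xs n \<otimes> (b2 \<otimes> a2) = xs n" . }
  hence "(a \<otimes> b, b2 \<otimes> a2) \<in> tGamma1 G xs" using c by (auto simp: memT)
  thus "a \<otimes> b \<in> Gamma1_of (tGamma1 G xs)" unfolding Gamma1_of_def by force
next
  fix a assume "a \<in> Gamma1_of (tGamma1 G xs)"
  then obtain a2 where A: "(a, a2) \<in> tGamma1 G xs" unfolding Gamma1_of_def by force
  have c: "a \<in> carrier G" "a2 \<in> carrier G" using A by (auto simp: memT)
  { fix n
    have xn: "xs n \<in> carrier G" using assms by auto
    have ea: "a \<otimes> xs n \<otimes> a2 = xs n" using A by (auto simp: memT)
    have "inv a \<otimes> xs n \<otimes> inv a2 = inv a \<otimes> (a \<otimes> xs n \<otimes> a2) \<otimes> inv a2" using ea by simp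
    also have "\<dots> = xs n" using c xn by (simp add: m_assoc invcl)
    finally have "inv a \<otimes> xs n \<otimes> inv a2 = xs n" . }
  hence "(inv a, inv a2) \<in> tGamma1 G xs" using c by (auto simp: memT)
  thus "inv a \<in> Gamma1_of (tGamma1 G xs)" unfolding Gamma1_of_def by force
qed

lemma part1:
  assumes "range xs \<subseteq> carrier G"
  shows "tGamma1 G xs = {(g, inv (xs n) \<otimes> inv g \<otimes> xs n) | g. g \<in> Gamma1_of (tGamma1 G xs)}"
proof
  have xn: "xs n \<in> carrier G" using assms by auto
  show "tGamma1 G xs \<subseteq> {(g, inv (xs n) \<otimes> inv g \<otimes> xs n) | g. g \<in> Gamma1_of (tGamma1 G xs)}"
  proof
    fix p assume p: "p \<in> tGamma1 G xs"
    obtain g1 g2 where pp: "p = (g1, g2)" by (cases p)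
    have "g2 = inv (xs n) \<otimes> inv g1 \<otimes> xs n" using sndT[of g1 g2 xs n] p pp xn by simp
    moreover have "g1 \<in> Gamma1_of (tGamma1 G xs)" using p pp unfolding Gamma1_of_def by force
    ultimately show "p \<in> {(g, inv (xs n) \<otimes> inv g \<otimes> xs n) | g. g \<in> Gamma1_of (tGamma1 G xs)}"
      using pp by blast
  qed
  show "{(g, inv (xs n) \<otimes> inv g \<otimes> xs n) | g. g \<in> Gamma1_of (tGamma1 G xs)} \<subseteq> tGamma1 G xs"
  proof
    fix p assume "p \<in> {(g, inv (xs n) \<otimes> inv g \<otimes> xs n) | g. g \<in> Gamma1_of (tGamma1 G xs)}"
    then obtain g where pp: "p = (g, inv (xs n) \<otimes> inv g \<otimes> xs n)" and g: "g \<in> Gamma1_of (tGamma1 G xs)"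
      by blast
    then obtain g2 where A: "(g, g2) \<in> tGamma1 G xs" unfolding Gamma1_of_def by force
    have "g2 = inv (xs n) \<otimes> inv g \<otimes> xs n" using sndT[OF A xn] .
    thus "p \<in> tGamma1 G xs" using A pp by simp
  qed
qed

lemma Mcal_sub:
  assumes "range xs \<subseteq> carrier G"
  shows "subgroup (Mcal G (tGamma1 G xs)) G"
  unfolding Mcal_def by (rule cent_sub) (auto simp: Gamma1_of_def memT)

lemma lr_eq:
  assumes H: "subgroup H G" and x: "x \<in> carrier G"
  shows "x <# ((inv x <# H) #> x) = H #> x"
proof
  have Hc: "\<And>h. h \<in> H \<Longrightarrow> h \<in> carrier G" using subgroup.mem_carrier[OF H] .
  show "x <# ((inv x <# H) #> x) \<subseteq> H #> x"
  proof
    fix y assume "y \<in> x <# ((inv x <# H) #> x)"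
    then obtain h where h: "h \<in> H" and y: "y = x \<otimes> (inv x \<otimes> h \<otimes> x)"
      unfolding l_coset_def r_coset_def by blast
    moreover have "x \<otimes> (inv x \<otimes> h \<otimes> x) = h \<otimes> x" using Hc[OF h] x by (simp add: m_assoc invcr)
    ultimately have "y = h \<otimes> x" by simp
    thus "y \<in> H #> x" unfolding r_coset_def using h by blast
  qed
  show "H #> x \<subseteq> x <# ((inv x <# H) #> x)"
  proof
    fix y assume "y \<in> H #> x"
    then obtain h where h: "h \<in> H" and y: "y = h \<otimes> x" unfolding r_coset_def by blast
    have "x \<otimes> (inv x \<otimes> h \<otimes> x) = h \<otimes> x" using Hc[OF h] x by (simp add: m_assoc invcr)
    hence "y = x \<otimes> (inv x \<otimes> h \<otimes> x)" using y by simp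
    moreover have "inv x \<otimes> h \<in> inv x <# H" unfolding l_coset_def using h by blast
    ultimately show "y \<in> x <# ((inv x <# H) #> x)" unfolding l_coset_def r_coset_def by blast
  qed
qed

lemma fixed_eq:
  assumes xs: "range xs \<subseteq> carrier G"
  shows "Mcal G (tGamma1 G xs) #> xs n0 = {y \<in> carrier G. \<forall>g\<in>tGamma1 G xs. tact G g y = y}"
proof
  let ?T = "tGamma1 G xs" and ?M = "Mcal G (tGamma1 G xs)"
  have x: "xs n0 \<in> carrier G" using xs by auto
  have Mc: "\<And>m. m \<in> ?M \<Longrightarrow> m \<in> carrier G" by (auto simp: Mcal_def centralizer_def)
  show "?M #> xs n0 \<subseteq> {y \<in> carrier G. \<forall>g\<in>?T. tact G g y = y}"
  proof
    fix y assume "y \<in> ?M #> xs n0"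
    then obtain m where m: "m \<in> ?M" and y: "y = m \<otimes> xs n0" unfolding r_coset_def by blast
    have mc: "m \<in> carrier G" using Mc m .
    { fix g assume gT: "g \<in> ?T"
      obtain g1 g2 where gg: "g = (g1, g2)" by (cases g)
      have g1c: "g1 \<in> carrier G" using gT gg by (auto simp: memT)
      have g2: "g2 = inv (xs n0) \<otimes> inv g1 \<otimes> xs n0" using sndT[of g1 g2 xs n0] gT gg x by simp
      have "g1 \<in> Gamma1_of ?T" using gT gg unfolding Gamma1_of_def by force
      hence com: "m \<otimes> g1 = g1 \<otimes> m" using m by (auto simp: Mcal_def centralizer_def)
      have "tact G g y = g1 \<otimes> m \<otimes> xs n0 \<otimes> (inv (xs n0) \<otimes> inv g1 \<otimes> xs n0)"
        using gg g2 y g1c mc x by (simp add: tact_def m_assoc)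
      also have "\<dots> = (g1 \<otimes> m) \<otimes> inv g1 \<otimes> xs n0" using g1c mc x by (simp add: m_assoc invcr)
      also have "\<dots> = (m \<otimes> g1) \<otimes> inv g1 \<otimes> xs n0" using com by simp
      also have "\<dots> = y" using g1c mc x y by (simp add: m_assoc)
      finally have "tact G g y = y" . }
    moreover have "y \<in> carrier G" using y mc x by simp
    ultimately show "y \<in> {y \<in> carrier G. \<forall>g\<in>?T. tact G g y = y}" by blast
  qed
  show "{y \<in> carrier G. \<forall>g\<in>?T. tact G g y = y} \<subseteq> ?M #> xs n0"
  proof
    fix y assume "y \<in> {y \<in> carrier G. \<forall>g\<in>?T. tact G g y = y}"
    hence yc: "y \<in> carrier G" and fx: "\<And>g. g \<in> ?T \<Longrightarrow> tact G g y = y" by auto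
    let ?m = "y \<otimes> inv (xs n0)"
    have mc: "?m \<in> carrier G" using yc x by simp
    { fix h assume "h \<in> Gamma1_of ?T"
      then obtain h2 where hT: "(h, h2) \<in> ?T" unfolding Gamma1_of_def by force
      have hc: "h \<in> carrier G" using hT by (auto simp: memT)
      have h2: "h2 = inv (xs n0) \<otimes> inv h \<otimes> xs n0" using sndT[OF hT x] .
      have "h \<otimes> y \<otimes> (inv (xs n0) \<otimes> inv h \<otimes> xs n0) = y" using fx[OF hT] h2 by (simp add: tact_def)
      hence "h \<otimes> y \<otimes> (inv (xs n0) \<otimes> inv h \<otimes> xs n0) \<otimes> inv (xs n0) = y \<otimes> inv (xs n0)" by simp
      hence e: "h \<otimes> ?m \<otimes> inv h = ?m" using hc yc x by (simp add: m_assoc)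
      have "?m \<otimes> h = h \<otimes> ?m \<otimes> inv h \<otimes> h" using e by simp
      also have "\<dots> = h \<otimes> ?m" using hc mc by (simp add: m_assoc)
      finally have "?m \<otimes> h = h \<otimes> ?m" . }
    hence "?m \<in> ?M" using mc by (auto simp: Mcal_def centralizer_def)
    moreover have "y = ?m \<otimes> xs n0" using yc x by (simp add: m_assoc)
    ultimately show "y \<in> ?M #> xs n0" unfolding r_coset_def by blast
  qed
qed

lemma part3:
  assumes H1: "subgroup H1 G" and H2: "subgroup H2 G" and xa: "xa \<in> carrier G" and xb: "xb \<in> carrier G"
    and ma: "ma \<in> H1 \<times> ((inv xa <# H1) #> xa)" and mb: "mb \<in> H2 \<times> ((inv xb <# H2) #> xb)"
    and eq: "tact G ma xa = tact G mb xb"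
  shows "tset_act G (H1 \<times> ((inv xa <# H1) #> xa)) xa \<inter> tset_act G (H2 \<times> ((inv xb <# H2) #> xb)) xb
     = tset_act G ((H1 \<times> ((inv xa <# H1) #> xa)) \<inter> (H2 \<times> ((inv xb <# H2) #> xb))) (tact G ma xa)"
proof -
  let ?p = "tact G ma xa"
  let ?A = "H1 \<times> ((inv xa <# H1) #> xa)" and ?B = "H2 \<times> ((inv xb <# H2) #> xb)"
  have H1c: "\<And>h. h \<in> H1 \<Longrightarrow> h \<in> carrier G" using subgroup.mem_carrier[OF H1] .
  have H2c: "\<And>h. h \<in> H2 \<Longrightarrow> h \<in> carrier G" using subgroup.mem_carrier[OF H2] .
  have "?p \<in> tset_act G ?A xa" unfolding tset_act_def using ma by (rule imageI)
  hence pa: "?p \<in> H1 #> xa" by (simp only: orbit_eq[OF H1 xa])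
  have "tact G mb xb \<in> tset_act G ?B xb" unfolding tset_act_def using mb by (rule imageI)
  hence pb0: "tact G mb xb \<in> H2 #> xb" by (simp only: orbit_eq[OF H2 xb])
  have pb: "?p \<in> H2 #> xb" using pb0 eq by (simp only:)
  obtain h0 where h0: "h0 \<in> H1" and ph0: "?p = h0 \<otimes> xa" using pa unfolding r_coset_def by blast
  have pc: "?p \<in> carrier G" using ph0 H1c[OF h0] xa by simp
  have Ea: "H1 #> xa = H1 #> ?p" by (rule repr_independence[OF pa xa H1])
  have Eb: "H2 #> xb = H2 #> ?p" by (rule repr_independence[OF pb xb H2])
  have "inv xa \<otimes> \<one> \<in> inv xa <# H1" unfolding l_coset_def using subgroup.one_closed[OF H1] by blast
  hence "(inv xa \<otimes> \<one>) \<otimes> xa \<in> (inv xa <# H1) #> xa" unfolding r_coset_def by blast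
  hence one_a: "\<one> \<in> (inv xa <# H1) #> xa" using xa by simp
  have "inv xb \<otimes> \<one> \<in> inv xb <# H2" unfolding l_coset_def using subgroup.one_closed[OF H2] by blast
  hence "(inv xb \<otimes> \<one>) \<otimes> xb \<in> (inv xb <# H2) #> xb" unfolding r_coset_def by blast
  hence one_b: "\<one> \<in> (inv xb <# H2) #> xb" using xb by simp
  have key: "\<And>H x g1 g2. subgroup H G \<Longrightarrow> x \<in> carrier G \<Longrightarrow> ?p \<in> H #> x \<Longrightarrow> g1 \<in> H
      \<Longrightarrow> g2 \<in> (inv x <# H) #> x \<Longrightarrow> g1 \<otimes> ?p \<otimes> g2 \<in> H #> x"
  proof -
    fix H x g1 g2 assume H: "subgroup H G" and x: "x \<in> carrier G" and p: "?p \<in> H #> x"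
      and g1: "g1 \<in> H" and g2: "g2 \<in> (inv x <# H) #> x"
    have Hc: "\<And>h. h \<in> H \<Longrightarrow> h \<in> carrier G" using subgroup.mem_carrier[OF H] .
    obtain h where h: "h \<in> H" and ph: "?p = h \<otimes> x" using p unfolding r_coset_def by blast
    obtain k where k: "k \<in> H" and gk: "g2 = inv x \<otimes> k \<otimes> x" using g2 unfolding l_coset_def r_coset_def by blast
    have alg: "g1 \<otimes> (h \<otimes> x) \<otimes> (inv x \<otimes> k \<otimes> x) = (g1 \<otimes> h \<otimes> k) \<otimes> x"
      using Hc[OF g1] Hc[OF h] Hc[OF k] x by (simp add: m_assoc invcr)
    have "g1 \<otimes> ?p \<otimes> g2 = (g1 \<otimes> h \<otimes> k) \<otimes> x" using alg ph gk by (simp only:)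
    moreover have "g1 \<otimes> h \<otimes> k \<in> H" using subgroup.m_closed[OF H subgroup.m_closed[OF H g1 h] k] .
    ultimately show "g1 \<otimes> ?p \<otimes> g2 \<in> H #> x" unfolding r_coset_def by blast
  qed
  show ?thesis
  proof
    show "tset_act G ?A xa \<inter> tset_act G ?B xb \<subseteq> tset_act G (?A \<inter> ?B) ?p"
    proof
      fix y assume "y \<in> tset_act G ?A xa \<inter> tset_act G ?B xb"
      hence "y \<in> H1 #> xa" "y \<in> H2 #> xb" unfolding orbit_eq[OF H1 xa] orbit_eq[OF H2 xb] by blast+
      hence "y \<in> H1 #> ?p" "y \<in> H2 #> ?p" using Ea Eb by (simp_all only:)
      then obtain h1 h2 where h1: "h1 \<in> H1" "y = h1 \<otimes> ?p" and h2: "h2 \<in> H2" "y = h2 \<otimes> ?p"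
        unfolding r_coset_def by blast
      have "h1 \<otimes> ?p = h2 \<otimes> ?p" by (rule trans[OF sym[OF h1(2)] h2(2)])
      hence "h1 = h2" using right_cancel[OF pc H1c[OF h1(1)] H2c[OF h2(1)]] by blast
      hence h12: "h1 \<in> H2" using h2(1) by simp
      have "y = tact G (h1, \<one>) ?p" unfolding tact_def[of G "(h1, \<one>)"] using h1(2) H1c[OF h1(1)] pc by simp
      moreover have "(h1, \<one>) \<in> ?A \<inter> ?B" using h1(1) h12 one_a one_b by blast
      ultimately show "y \<in> tset_act G (?A \<inter> ?B) ?p" unfolding tset_act_def by blast
    qed
    show "tset_act G (?A \<inter> ?B) ?p \<subseteq> tset_act G ?A xa \<inter> tset_act G ?B xb"
    proof
      fix y assume "y \<in> tset_act G (?A \<inter> ?B) ?p"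
      then obtain q where q: "q \<in> ?A \<inter> ?B" and yq: "y = tact G q ?p"
        unfolding tset_act_def by (rule imageE)
      obtain g1 g2 where qq: "q = (g1, g2)" by (cases q)
      have qA: "(g1, g2) \<in> ?A" and qB: "(g1, g2) \<in> ?B" using q unfolding qq by blast+
      have g: "g1 \<in> H1" "g1 \<in> H2" "g2 \<in> (inv xa <# H1) #> xa" "g2 \<in> (inv xb <# H2) #> xb"
        using qA qB by blast+
      have y: "y = g1 \<otimes> ?p \<otimes> g2" using yq unfolding qq tact_def by simp
      have "y \<in> H1 #> xa" unfolding y by (rule key[OF H1 xa pa g(1) g(3)])
      moreover have "y \<in> H2 #> xb" unfolding y by (rule key[OF H2 xb pb g(2) g(4)])
      ultimately show "y \<in> tset_act G ?A xa \<inter> tset_act G ?B xb"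
        unfolding orbit_eq[OF H1 xa] orbit_eq[OF H2 xb] by blast
    qed
  qed
qed

lemma main_lemma:
  fixes xs :: "nat \<Rightarrow> 'a" and n0 :: nat
  assumes fam: "range xs \<subseteq> carrier G"
  defines "x \<equiv> xs n0"
  shows
    "subgroup (Gamma1_of (tGamma1 G xs)) G
     \<and> (\<forall>n. tGamma1 G xs = {(g, inv\<^bsub>G\<^esub> (xs n) \<otimes>\<^bsub>G\<^esub> inv\<^bsub>G\<^esub> g \<otimes>\<^bsub>G\<^esub> xs n) | g. g \<in> Gamma1_of (tGamma1 G xs)})
     \<comment> \<open>(2)\<close>
     \<and> tset_act G (Mtilde G (tGamma1 G xs) x) x
         = x <#\<^bsub>G\<^esub> ((inv\<^bsub>G\<^esub> x) <#\<^bsub>G\<^esub> Mcal G (tGamma1 G xs) #>\<^bsub>G\<^esub> x)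
     \<and> x <#\<^bsub>G\<^esub> ((inv\<^bsub>G\<^esub> x) <#\<^bsub>G\<^esub> Mcal G (tGamma1 G xs) #>\<^bsub>G\<^esub> x)
         = Mcal G (tGamma1 G xs) #>\<^bsub>G\<^esub> x
     \<and> Mcal G (tGamma1 G xs) #>\<^bsub>G\<^esub> x
         = {y \<in> carrier G. \<forall>g\<in>tGamma1 G xs. tact G g y = y}
     \<and> (\<forall>g1\<in>Mcal G (tGamma1 G xs). \<forall>g2\<in>Mcal G (tGamma1 G xs). \<forall>m\<in>Mcal G (tGamma1 G xs).
          tact G (g1, inv\<^bsub>G\<^esub> x \<otimes>\<^bsub>G\<^esub> g2 \<otimes>\<^bsub>G\<^esub> x) (m \<otimes>\<^bsub>G\<^esub> x)
            = g1 \<otimes>\<^bsub>G\<^esub> m \<otimes>\<^bsub>G\<^esub> g2 \<otimes>\<^bsub>G\<^esub> x)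
     \<comment> \<open>(3)\<close>
     \<and> (\<forall>xa xb :: nat \<Rightarrow> 'a. \<forall>na nb ma mb.
          inj xa \<longrightarrow> range xa \<subseteq> carrier G \<longrightarrow> tGamma1 G xa \<noteq> {tone G} \<longrightarrow>
          inj xb \<longrightarrow> range xb \<subseteq> carrier G \<longrightarrow> tGamma1 G xb \<noteq> {tone G} \<longrightarrow>
          ma \<in> Mtilde G (tGamma1 G xa) (xa na) \<longrightarrow>
          mb \<in> Mtilde G (tGamma1 G xb) (xb nb) \<longrightarrow>
          tact G ma (xa na) = tact G mb (xb nb) \<longrightarrow>
          (tset_act G (Mtilde G (tGamma1 G xa) (xa na)) (xa na)
             \<inter> tset_act G (Mtilde G (tGamma1 G xb) (xb nb)) (xb nb)
           = tset_act G (Mtilde G (tGamma1 G xa) (xa na) \<inter> Mtilde G (tGamma1 G xb) (xb nb))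
               (tact G ma (xa na))
          \<and> tset_act G (Mtilde G (tGamma1 G xa) (xa na)) (xa na)
             \<inter> tset_act G (Mtilde G (tGamma1 G xb) (xb nb)) (xb nb)
           = tset_act G (Mtilde G (tGamma1 G xa) (xa na) \<inter> Mtilde G (tGamma1 G xb) (xb nb))
               (tact G mb (xb nb))))"
proof -
  have xc: "x \<in> carrier G" using fam unfolding x_def by auto
  let ?T = "tGamma1 G xs"
  let ?M = "Mcal G (tGamma1 G xs)"
  have MS: "subgroup ?M G" by (rule Mcal_sub[OF fam])
  have Mt: "Mtilde G ?T x = ?M \<times> ((inv x <# ?M) #> x)" by (simp add: Mtilde_def)
  have c1: "subgroup (Gamma1_of ?T) G" by (rule subT[OF fam])
  have c2: "\<forall>n. ?T = {(g, inv (xs n) \<otimes> inv g \<otimes> xs n) | g. g \<in> Gamma1_of ?T}"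
    using part1[OF fam] by blast
  have c3: "tset_act G (Mtilde G ?T x) x = x <# ((inv x <# ?M) #> x)"
    unfolding Mt orbit_eq[OF MS xc] lr_eq[OF MS xc] ..
  have c4: "x <# ((inv x <# ?M) #> x) = ?M #> x" by (rule lr_eq[OF MS xc])
  have c5: "?M #> x = {y \<in> carrier G. \<forall>g\<in>?T. tact G g y = y}"
    unfolding x_def by (rule fixed_eq[OF fam])
  have Mc: "\<And>m. m \<in> ?M \<Longrightarrow> m \<in> carrier G" using subgroup.mem_carrier[OF MS] .
  have c6: "\<forall>g1\<in>?M. \<forall>g2\<in>?M. \<forall>m\<in>?M.
          tact G (g1, inv x \<otimes> g2 \<otimes> x) (m \<otimes> x) = g1 \<otimes> m \<otimes> g2 \<otimes> x"
  proof (intro ballI)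
    fix g1 g2 m assume "g1 \<in> ?M" "g2 \<in> ?M" "m \<in> ?M"
    hence "g1 \<in> carrier G" "g2 \<in> carrier G" "m \<in> carrier G" using Mc by blast+
    thus "tact G (g1, inv x \<otimes> g2 \<otimes> x) (m \<otimes> x) = g1 \<otimes> m \<otimes> g2 \<otimes> x"
      using xc by (simp add: tact_def m_assoc invcr)
  qed
  have c7: "\<forall>xa xb :: nat \<Rightarrow> 'a. \<forall>na nb ma mb.
          inj xa \<longrightarrow> range xa \<subseteq> carrier G \<longrightarrow> tGamma1 G xa \<noteq> {tone G} \<longrightarrow>
          inj xb \<longrightarrow> range xb \<subseteq> carrier G \<longrightarrow> tGamma1 G xb \<noteq> {tone G} \<longrightarrow>
          ma \<in> Mtilde G (tGamma1 G xa) (xa na) \<longrightarrow>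
          mb \<in> Mtilde G (tGamma1 G xb) (xb nb) \<longrightarrow>
          tact G ma (xa na) = tact G mb (xb nb) \<longrightarrow>
          (tset_act G (Mtilde G (tGamma1 G xa) (xa na)) (xa na)
             \<inter> tset_act G (Mtilde G (tGamma1 G xb) (xb nb)) (xb nb)
           = tset_act G (Mtilde G (tGamma1 G xa) (xa na) \<inter> Mtilde G (tGamma1 G xb) (xb nb))
               (tact G ma (xa na))
          \<and> tset_act G (Mtilde G (tGamma1 G xa) (xa na)) (xa na)
             \<inter> tset_act G (Mtilde G (tGamma1 G xb) (xb nb)) (xb nb)
           = tset_act G (Mtilde G (tGamma1 G xa) (xa na) \<inter> Mtilde G (tGamma1 G xb) (xb nb))
               (tact G mb (xb nb)))"
  proof (intro allI impI)
    fix xa xb :: "nat \<Rightarrow> 'a" and na nb ma mb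
    assume ra: "range xa \<subseteq> carrier G" and rb: "range xb \<subseteq> carrier G"
      and ma: "ma \<in> Mtilde G (tGamma1 G xa) (xa na)" and mb: "mb \<in> Mtilde G (tGamma1 G xb) (xb nb)"
      and eq: "tact G ma (xa na) = tact G mb (xb nb)"
    have R: "tset_act G (Mtilde G (tGamma1 G xa) (xa na)) (xa na)
             \<inter> tset_act G (Mtilde G (tGamma1 G xb) (xb nb)) (xb nb)
           = tset_act G (Mtilde G (tGamma1 G xa) (xa na) \<inter> Mtilde G (tGamma1 G xb) (xb nb))
               (tact G ma (xa na))"
      using part3[OF Mcal_sub[OF ra] Mcal_sub[OF rb], of "xa na" "xb nb" ma mb] ra rb ma mb eq
      unfolding Mtilde_def by blast
    show "tset_act G (Mtilde G (tGamma1 G xa) (xa na)) (xa na)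
             \<inter> tset_act G (Mtilde G (tGamma1 G xb) (xb nb)) (xb nb)
           = tset_act G (Mtilde G (tGamma1 G xa) (xa na) \<inter> Mtilde G (tGamma1 G xb) (xb nb))
               (tact G ma (xa na))
          \<and> tset_act G (Mtilde G (tGamma1 G xa) (xa na)) (xa na)
             \<inter> tset_act G (Mtilde G (tGamma1 G xb) (xb nb)) (xb nb)
           = tset_act G (Mtilde G (tGamma1 G xa) (xa na) \<inter> Mtilde G (tGamma1 G xb) (xb nb))
               (tact G mb (xb nb))"
      using R eq by (simp only: simp_thms)
  qed
  show ?thesis using c1 c2 c3 c4 c5 c6 c7 by (intro conjI)
qed


end

theorem proposition5:
  fixes G :: "('a, 'b) monoid_scheme" and xs :: "nat \<Rightarrow> 'a" and n0 :: nat
  assumes grp: "group G"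
    and fam: "inj xs" "range xs \<subseteq> carrier G"
    and nontriv: "tGamma1 G xs \<noteq> {tone G}"
  defines "x \<equiv> xs n0"
  shows
    \<comment> \<open>(1)\<close>
    "subgroup (Gamma1_of (tGamma1 G xs)) G
     \<and> (\<forall>n. tGamma1 G xs = {(g, inv\<^bsub>G\<^esub> (xs n) \<otimes>\<^bsub>G\<^esub> inv\<^bsub>G\<^esub> g \<otimes>\<^bsub>G\<^esub> xs n) | g. g \<in> Gamma1_of (tGamma1 G xs)})
     \<comment> \<open>(2)\<close>
     \<and> tset_act G (Mtilde G (tGamma1 G xs) x) x
         = x <#\<^bsub>G\<^esub> ((inv\<^bsub>G\<^esub> x) <#\<^bsub>G\<^esub> Mcal G (tGamma1 G xs) #>\<^bsub>G\<^esub> x)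
     \<and> x <#\<^bsub>G\<^esub> ((inv\<^bsub>G\<^esub> x) <#\<^bsub>G\<^esub> Mcal G (tGamma1 G xs) #>\<^bsub>G\<^esub> x)
         = Mcal G (tGamma1 G xs) #>\<^bsub>G\<^esub> x
     \<and> Mcal G (tGamma1 G xs) #>\<^bsub>G\<^esub> x
         = {y \<in> carrier G. \<forall>g\<in>tGamma1 G xs. tact G g y = y}
     \<and> (\<forall>g1\<in>Mcal G (tGamma1 G xs). \<forall>g2\<in>Mcal G (tGamma1 G xs). \<forall>m\<in>Mcal G (tGamma1 G xs).
          tact G (g1, inv\<^bsub>G\<^esub> x \<otimes>\<^bsub>G\<^esub> g2 \<otimes>\<^bsub>G\<^esub> x) (m \<otimes>\<^bsub>G\<^esub> x)
            = g1 \<otimes>\<^bsub>G\<^esub> m \<otimes>\<^bsub>G\<^esub> g2 \<otimes>\<^bsub>G\<^esub> x)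
     \<comment> \<open>(3)\<close>
     \<and> (\<forall>xa xb :: nat \<Rightarrow> 'a. \<forall>na nb ma mb.
          inj xa \<longrightarrow> range xa \<subseteq> carrier G \<longrightarrow> tGamma1 G xa \<noteq> {tone G} \<longrightarrow>
          inj xb \<longrightarrow> range xb \<subseteq> carrier G \<longrightarrow> tGamma1 G xb \<noteq> {tone G} \<longrightarrow>
          ma \<in> Mtilde G (tGamma1 G xa) (xa na) \<longrightarrow>
          mb \<in> Mtilde G (tGamma1 G xb) (xb nb) \<longrightarrow>
          tact G ma (xa na) = tact G mb (xb nb) \<longrightarrow>
          (tset_act G (Mtilde G (tGamma1 G xa) (xa na)) (xa na)
             \<inter> tset_act G (Mtilde G (tGamma1 G xb) (xb nb)) (xb nb)
           = tset_act G (Mtilde G (tGamma1 G xa) (xa na) \<inter> Mtilde G (tGamma1 G xb) (xb nb))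
               (tact G ma (xa na))
          \<and> tset_act G (Mtilde G (tGamma1 G xa) (xa na)) (xa na)
             \<inter> tset_act G (Mtilde G (tGamma1 G xb) (xb nb)) (xb nb)
           = tset_act G (Mtilde G (tGamma1 G xa) (xa na) \<inter> Mtilde G (tGamma1 G xb) (xb nb))
               (tact G mb (xb nb))))"
  unfolding x_def by (rule group.main_lemma[OF grp fam(2)])

end
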